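(* Let $X$ be a finite poset and $F$ a field with $\mathrm{char}(F)=2$ and $|F|>2$. Then every bijective $F$-linear map $\varphi:I(X,F)\to I(X,F)$ satisfying $\varphi(E(I(X,F)))\subseteq E(I(X,F))$ is a Lie automorphism of $I(X,F)$, i.e. $\varphi(ab+ba)=\varphi(a)\varphi(b)+\varphi(b)\varphi(a)$ for all $a,b\in I(X,F)$.
   Context: For a locally finite poset $X$ and a field $F$, $I(X,F)$ is the incidence algebra: functions $f:X\times X\to F$ with $f(x,y)=0$ unless $x\le y$, with convolution product $(fg)(x,y)=\sum_{x\le z\le y}f(x,z)g(z,y)$. $E(A)$ denotes the set of idempotents of a ring $A$. In characteristic $2$, a Lie automorphism of an algebra $A$ means a bijective linear map $A\to A$ preserving the product $a\circ b=ab+ba$ (which coincides with $ab-ba$). *)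

theory Defs
  imports Main
begin

definition is_partial_order :: "('x \<Rightarrow> 'x \<Rightarrow> bool) \<Rightarrow> bool" where
  "is_partial_order le \<longleftrightarrow>
     (\<forall>x. le x x) \<and> (\<forall>x y. le x y \<and> le y x \<longrightarrow> x = y) \<and>
     (\<forall>x y z. le x y \<and> le y z \<longrightarrow> le x z)"

definition incidence_algebra :: "('x \<Rightarrow> 'x \<Rightarrow> bool) \<Rightarrow> ('x \<Rightarrow> 'x \<Rightarrow> 'f::field) set" where
  "incidence_algebra le = {f. \<forall>x y. \<not> le x y \<longrightarrow> f x y = 0}"

definition inc_mult :: "('x::finite \<Rightarrow> 'x \<Rightarrow> bool) \<Rightarrow> ('x \<Rightarrow> 'x \<Rightarrow> 'f::field)
    \<Rightarrow> ('x \<Rightarrow> 'x \<Rightarrow> 'f) \<Rightarrow> ('x \<Rightarrow> 'x \<Rightarrow> 'f)" where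
  "inc_mult le f g = (\<lambda>x y. \<Sum>z\<in>{z. le x z \<and> le z y}. f x z * g z y)"

definition inc_idempotents :: "('x::finite \<Rightarrow> 'x \<Rightarrow> bool) \<Rightarrow> ('x \<Rightarrow> 'x \<Rightarrow> 'f::field) set" where
  "inc_idempotents le = {e \<in> incidence_algebra le. inc_mult le e e = e}"

definition inc_linear :: "('x \<Rightarrow> 'x \<Rightarrow> bool) \<Rightarrow> (('x \<Rightarrow> 'x \<Rightarrow> 'f::field) \<Rightarrow> ('x \<Rightarrow> 'x \<Rightarrow> 'f)) \<Rightarrow> bool" where
  "inc_linear le \<phi> \<longleftrightarrow>
     (\<forall>a\<in>incidence_algebra le. \<forall>b\<in>incidence_algebra le. \<phi> (\<lambda>x y. a x y + b x y) = (\<lambda>x y. \<phi> a x y + \<phi> b x y)) \<and>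
     (\<forall>c. \<forall>a\<in>incidence_algebra le. \<phi> (\<lambda>x y. c * a x y) = (\<lambda>x y. c * \<phi> a x y))"

end

theory Submission imports Defs "HOL-Library.Function_Algebras" begin

definition smul :: "'f::field \<Rightarrow> ('x \<Rightarrow> 'x \<Rightarrow> 'f) \<Rightarrow> ('x \<Rightarrow> 'x \<Rightarrow> 'f)" where
  "smul c f = (\<lambda>x y. c * f x y)"

definition Bm :: "'x \<Rightarrow> 'x \<Rightarrow> ('x \<Rightarrow> 'x \<Rightarrow> 'f::field)" where
  "Bm x y = (\<lambda>i j. if i = x \<and> j = y then 1 else 0)"

definition jor :: "('x::finite \<Rightarrow> 'x \<Rightarrow> bool) \<Rightarrow> ('x \<Rightarrow> 'x \<Rightarrow> 'f::field) \<Rightarrow> ('x \<Rightarrow> 'x \<Rightarrow> 'f) \<Rightarrow> ('x \<Rightarrow> 'x \<Rightarrow> 'f)" where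
  "jor le f g = inc_mult le f g + inc_mult le g f"

lemma smul_apply[simp]: "smul c f x y = c * f x y"
  by (simp add: smul_def)

lemma sum_fun_apply2: "(sum g S) x y = (\<Sum>p\<in>S. g p x y)"
  by (induct S rule: infinite_finite_induct) auto

lemma smul_add: "smul c (f + g) = smul c f + smul c g"
  by (simp add: fun_eq_iff distrib_left)
lemma smul_smul: "smul c (smul d f) = smul (c * d) f"
  by (simp add: fun_eq_iff mult.assoc)
lemma smul_zero[simp]: "smul c 0 = 0"
  by (simp add: fun_eq_iff)
lemma smul_zero2[simp]: "smul 0 f = 0"
  by (simp add: fun_eq_iff)
lemma smul_one[simp]: "smul 1 f = f"
  by (simp add: fun_eq_iff)
lemma smul_sum: "smul c (sum g S) = (\<Sum>p\<in>S. smul c (g p))"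
  by (rule sum_comp_morphism[of "smul c", OF smul_zero smul_add, unfolded o_def, symmetric])

lemma im_add_l: "inc_mult le (f + g) h = inc_mult le f h + inc_mult le g h"
  by (simp add: inc_mult_def fun_eq_iff distrib_right sum.distrib)
lemma im_add_r: "inc_mult le h (f + g) = inc_mult le h f + inc_mult le h g"
  by (simp add: inc_mult_def fun_eq_iff distrib_left sum.distrib)
lemma im_smul_l: "inc_mult le (smul c f) h = smul c (inc_mult le f h)"
  by (simp add: inc_mult_def fun_eq_iff sum_distrib_left mult.assoc)
lemma im_smul_r: "inc_mult le h (smul c f) = smul c (inc_mult le h f)"
  by (simp add: inc_mult_def fun_eq_iff sum_distrib_left mult_ac)
lemma im_zero_l[simp]: "inc_mult le 0 h = 0"
  by (simp add: inc_mult_def fun_eq_iff)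
lemma im_zero_r[simp]: "inc_mult le h 0 = 0"
  by (simp add: inc_mult_def fun_eq_iff)

lemma jor_comm: "jor le f g = jor le g f"
  by (simp add: jor_def add.commute)
lemma jor_add_l: "jor le (f + g) h = jor le f h + jor le g h"
  by (simp add: jor_def im_add_l im_add_r add_ac)
lemma jor_add_r: "jor le h (f + g) = jor le h f + jor le h g"
  by (simp add: jor_def im_add_l im_add_r add_ac)
lemma jor_smul_l: "jor le (smul c f) h = smul c (jor le f h)"
  by (simp add: jor_def im_smul_l im_smul_r smul_add)
lemma jor_smul_r: "jor le h (smul c f) = smul c (jor le h f)"
  by (simp add: jor_def im_smul_l im_smul_r smul_add)
lemma jor_zero_l[simp]: "jor le 0 h = 0" by (simp add: jor_def)
lemma jor_zero_r[simp]: "jor le h 0 = 0" by (simp add: jor_def)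
lemma jor_sum_l: "jor le (sum g S) h = (\<Sum>p\<in>S. jor le (g p) h)"
  by (rule sum_comp_morphism[of "\<lambda>f. jor le f h", OF jor_zero_l jor_add_l, unfolded o_def, symmetric])
lemma jor_sum_r: "jor le h (sum g S) = (\<Sum>p\<in>S. jor le h (g p))"
  by (rule sum_comp_morphism[of "\<lambda>f. jor le h f", OF jor_zero_r jor_add_r, unfolded o_def, symmetric])

lemma jor_self: "(1::'f::field) + 1 = 0 \<Longrightarrow> jor le (f::'x::finite \<Rightarrow> 'x \<Rightarrow> 'f) f = 0"
proof -
  assume h: "(1::'f) + 1 = 0"
  have "\<And>t::'f. t + t = 0" proof -
    fix t :: 'f have "t + t = (1+1) * t" by (simp add: distrib_right)
    then show "t + t = 0" using h by simp
  qed
  then show ?thesis by (simp add: jor_def fun_eq_iff)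
qed

lemma char2_cancel: "(1::'f::field) + 1 = 0 \<Longrightarrow> (f::'x \<Rightarrow> 'x \<Rightarrow> 'f) + f = 0"
proof -
  assume h: "(1::'f) + 1 = 0"
  have "\<And>t::'f. t + t = 0" proof -
    fix t :: 'f have "t + t = (1+1) * t" by (simp add: distrib_right)
    then show "t + t = 0" using h by simp
  qed
  then show ?thesis by (simp add: fun_eq_iff)
qed

lemma sq_add: "inc_mult le (X + Y) (X + Y) = inc_mult le X X + inc_mult le Y Y + jor le X Y"
  by (simp add: im_add_l im_add_r jor_def add_ac)

lemma Bm_mult: "le x y \<Longrightarrow> le u v \<Longrightarrow>
   inc_mult le (Bm x y) (Bm u v) = (if y = u then Bm x v else (0::'x::finite \<Rightarrow> 'x \<Rightarrow> 'f::field))"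
proof -
  assume a: "le x y" "le u v"
  show ?thesis
  proof (rule ext, rule ext)
    fix i j
    have "inc_mult le (Bm x y :: 'x \<Rightarrow> 'x \<Rightarrow> 'f) (Bm u v) i j
       = (\<Sum>z\<in>{z. le i z \<and> le z j}. if y = z then (if i = x \<and> y = u \<and> j = v then 1 else 0) else (0::'f))"
      unfolding inc_mult_def Bm_def by (rule sum.cong) auto
    also have "\<dots> = (if y = u then Bm x v else 0) i j"
      using a by (auto simp: sum.delta' Bm_def)
    finally show "inc_mult le (Bm x y :: 'x \<Rightarrow> 'x \<Rightarrow> 'f) (Bm u v) i j = (if y = u then Bm x v else 0) i j" .
  qed
qed

lemma L_iv:
  assumes "inc_mult le X X = X" "inc_mult le (X+Y) (X+Y) = X+Y" "inc_mult le (X+Z) (X+Z) = X+Z"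
    "inc_mult le (X+Y+Z) (X+Y+Z) = X+Y+Z"
  shows "jor le Y Z = 0"
proof -
  have h1: "inc_mult le (X+Y+Z) (X+Y+Z) = inc_mult le (X+Y) (X+Y) + inc_mult le Z Z + jor le X Z + jor le Y Z"
    using sq_add[of le "X+Y" Z] jor_add_l[of le X Y Z] by (simp only: add.assoc)
  have h2: "inc_mult le Z Z + jor le X Z = Z" using assms(1,3) sq_add[of le X Z]
    by (metis add_left_cancel add.assoc)
  have "X+Y+Z = (X+Y) + (inc_mult le Z Z + jor le X Z) + jor le Y Z" using h1 assms(2,4) by (simp add: add.assoc)
  also have "\<dots> = X+Y+Z + jor le Y Z" using h2 by simp
  finally show ?thesis by simp
qed

lemma vand: "(p::'f::field) + q = r \<Longrightarrow> c*c*p + c*q = c*r \<Longrightarrow> c\<noteq>0 \<Longrightarrow> c\<noteq>1 \<Longrightarrow> p = 0"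
proof -
  assume h: "p + q = r" "c*c*p + c*q = c*r" "c\<noteq>0" "c\<noteq>1"
  then have "q = r - p" by (simp add: algebra_simps)
  then have "c*c*p + c*(r-p) = c*r" using h by simp
  then have "c*(c-1)*p = 0" by (simp add: algebra_simps)
  then show "p = 0" using h by simp
qed

lemma L_ii:
  fixes c :: "'f::field"
  assumes c: "c \<noteq> 0" "c \<noteq> 1" and E: "inc_mult le E E = E"
    and fam: "\<And>a. inc_mult le (E + smul a N) (E + smul a N) = E + smul (a::'f) N"
  shows "jor le E N = N \<and> inc_mult le N N = 0"
proof -
  have g: "\<And>a. smul (a*a) (inc_mult le N N) + smul a (jor le E N) = smul a N"
    using fam E by (simp add: sq_add im_smul_l im_smul_r jor_smul_r smul_smul add.assoc)
  have g1: "\<And>i j. inc_mult le N N i j + jor le E N i j = N i j" using g[of 1] by (simp add: fun_eq_iff)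
  have gc: "\<And>i j. c*c*inc_mult le N N i j + c * jor le E N i j = c * N i j" using g[of c] by (simp add: fun_eq_iff)
  have p0: "\<And>i j. inc_mult le N N i j = 0"
  proof -
    fix i j
    show "inc_mult le N N i j = 0" using vand[OF g1[of i j] gc[of i j] c] .
  qed
  show ?thesis using g1 p0 by (simp add: fun_eq_iff)
qed


lemma L_iii:
  assumes h: "inc_mult le (E+N+M+K) (E+N+M+K) = E+N+M+K"
    and "inc_mult le E E = E" "jor le E N = N" "jor le E M = M" "jor le E K = 0"
    "inc_mult le N N = 0" "inc_mult le M M = 0" "inc_mult le K K = 0" "jor le N K = 0" "jor le M K = 0"
  shows "jor le N M = K"
proof -
  have "inc_mult le (E+N+M+K) (E+N+M+K) = E + N + M + jor le N M"
    by (simp add: sq_add jor_add_l assms(2-10))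
  then have "E + (N + (M + K)) = E + (N + (M + jor le N M))" using h by (simp add: add.assoc)
  then show ?thesis by simp
qed

lemma jor_expand:
  "jor le (\<Sum>p\<in>S. smul (\<alpha> p) (f p)) (\<Sum>q\<in>T. smul (\<beta> q) (g q))
     = (\<Sum>p\<in>S. \<Sum>q\<in>T. smul (\<alpha> p * \<beta> q) (jor le (f p) (g q)))"
  by (simp add: jor_sum_l jor_sum_r jor_smul_l jor_smul_r smul_smul smul_sum mult.commute) (rule sum.swap)

context
  fixes le :: "'x::finite \<Rightarrow> 'x \<Rightarrow> bool" and \<phi> :: "('x \<Rightarrow> 'x \<Rightarrow> 'f::field) \<Rightarrow> ('x \<Rightarrow> 'x \<Rightarrow> 'f)"
  assumes po: "is_partial_order le" and ch2: "(1::'f) + 1 = 0" and cc: "\<exists>c::'f. c \<noteq> 0 \<and> c \<noteq> 1"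
    and lin: "inc_linear le \<phi>" and idp: "\<phi> ` inc_idempotents le \<subseteq> inc_idempotents le"
begin

abbreviation bb :: "'x \<Rightarrow> 'x \<Rightarrow> ('x \<Rightarrow> 'x \<Rightarrow> 'f)" where "bb x y \<equiv> Bm x y"

lemma rf[simp]: "le x x" using po by (simp add: is_partial_order_def)
lemma tr: "le x y \<Longrightarrow> le y z \<Longrightarrow> le x z" using po unfolding is_partial_order_def by blast
lemma asy: "le x y \<Longrightarrow> le y x \<Longrightarrow> x = y" using po unfolding is_partial_order_def by blast

lemma c2a[simp]: "(f::'x \<Rightarrow> 'x \<Rightarrow> 'f) + f = 0" by (rule char2_cancel[OF ch2])
lemma c2b[simp]: "(f::'x \<Rightarrow> 'x \<Rightarrow> 'f) + (f + g) = g" by (simp add: add.assoc[symmetric])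

lemma A_add: "a \<in> incidence_algebra le \<Longrightarrow> c \<in> incidence_algebra le \<Longrightarrow> a + c \<in> incidence_algebra le"
  by (simp add: incidence_algebra_def)
lemma A_smul: "a \<in> incidence_algebra le \<Longrightarrow> smul t a \<in> incidence_algebra le"
  by (simp add: incidence_algebra_def)
lemma A_zero: "0 \<in> incidence_algebra le"
  by (simp add: incidence_algebra_def)
lemma A_Bm: "le x y \<Longrightarrow> bb x y \<in> incidence_algebra le"
  by (auto simp add: incidence_algebra_def Bm_def)
lemma A_mult: "inc_mult le f g \<in> incidence_algebra le"
  unfolding incidence_algebra_def
proof (intro CollectI allI impI)
  fix x y assume "\<not> le x y"
  then have e: "{z. le x z \<and> le z y} = {}" using tr by blast
  show "inc_mult le f g x y = 0" unfolding inc_mult_def by (simp only: e sum.empty)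
qed
lemma A_jor: "jor le f g \<in> incidence_algebra le"
  unfolding jor_def by (rule A_add[OF A_mult A_mult])

lemma phi_add: "a \<in> incidence_algebra le \<Longrightarrow> c \<in> incidence_algebra le \<Longrightarrow> \<phi> (a + c) = \<phi> a + \<phi> c"
proof -
  assume h: "a \<in> incidence_algebra le" "c \<in> incidence_algebra le"
  have e: "a + c = (\<lambda>x y. a x y + c x y)" by (simp add: fun_eq_iff)
  have "\<phi> (\<lambda>x y. a x y + c x y) = (\<lambda>x y. \<phi> a x y + \<phi> c x y)" using lin h unfolding inc_linear_def by blast
  then show ?thesis by (simp add: e fun_eq_iff)
qed
lemma phi_smul: "a \<in> incidence_algebra le \<Longrightarrow> \<phi> (smul t a) = smul t (\<phi> a)"
  using lin unfolding inc_linear_def smul_def by blast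
lemma phi_zero: "\<phi> 0 = 0"
proof -
  have "\<phi> (smul 0 0) = smul 0 (\<phi> 0)" by (rule phi_smul[OF A_zero])
  then show ?thesis by simp
qed
lemma phi_sum: "(\<And>p. p \<in> S \<Longrightarrow> g p \<in> incidence_algebra le) \<Longrightarrow> \<phi> (sum g S) = (\<Sum>p\<in>S. \<phi> (g p))"
proof (induct S rule: infinite_finite_induct)
  case (infinite A) then show ?case by (simp only: sum.infinite[OF infinite(1)] phi_zero)
next
  case empty then show ?case by (simp only: sum.empty phi_zero)
next
  case (insert x F)
  have s: "sum g F \<in> incidence_algebra le" using insert(4)
    by (simp add: incidence_algebra_def sum_fun_apply2)
  have "\<phi> (sum g (insert x F)) = \<phi> (g x + sum g F)" using insert(1,2) by simp
  also have "\<dots> = \<phi> (g x) + \<phi> (sum g F)" using phi_add insert(4) s by simp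
  also have "\<phi> (sum g F) = (\<Sum>p\<in>F. \<phi> (g p))" using insert by simp
  finally show ?case using insert(1,2) by simp
qed
lemma phi_idem: "e \<in> incidence_algebra le \<Longrightarrow> inc_mult le e e = e \<Longrightarrow> inc_mult le (\<phi> e) (\<phi> e) = \<phi> e"
  using idp by (auto simp: inc_idempotents_def)

lemmas bs = im_add_l im_add_r im_smul_l im_smul_r Bm_mult smul_smul

lemma K1: assumes "le x y" "x \<noteq> y"
  shows "jor le (\<phi> (bb x x)) (\<phi> (bb x y)) = \<phi> (bb x y) \<and> inc_mult le (\<phi> (bb x y)) (\<phi> (bb x y)) = 0"
proof -
  obtain c :: 'f where c: "c \<noteq> 0" "c \<noteq> 1" using cc by blast
  show ?thesis
  proof (rule L_ii[OF c])
    show "inc_mult le (\<phi> (bb x x)) (\<phi> (bb x x)) = \<phi> (bb x x)"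
      by (rule phi_idem) (simp_all add: A_Bm Bm_mult)
    fix a :: 'f
    have "\<phi> (bb x x + smul a (bb x y)) = \<phi> (bb x x) + smul a (\<phi> (bb x y))"
      using assms by (simp add: phi_add phi_smul A_Bm A_smul)
    moreover have "inc_mult le (\<phi> (bb x x + smul a (bb x y))) (\<phi> (bb x x + smul a (bb x y))) = \<phi> (bb x x + smul a (bb x y))"
      by (rule phi_idem) (use assms in \<open>simp_all add: A_Bm A_smul A_add bs\<close>)
    ultimately show "inc_mult le (\<phi> (bb x x) + smul a (\<phi> (bb x y))) (\<phi> (bb x x) + smul a (\<phi> (bb x y))) = \<phi> (bb x x) + smul a (\<phi> (bb x y))"
      by simp
  qed
qed

lemma K2: assumes "le x y" "x \<noteq> y"
  shows "jor le (\<phi> (bb y y)) (\<phi> (bb x y)) = \<phi> (bb x y)"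
proof -
  obtain c :: 'f where c: "c \<noteq> 0" "c \<noteq> 1" using cc by blast
  have "jor le (\<phi> (bb y y)) (\<phi> (bb x y)) = \<phi> (bb x y) \<and> inc_mult le (\<phi> (bb x y)) (\<phi> (bb x y)) = 0"
  proof (rule L_ii[OF c])
    show "inc_mult le (\<phi> (bb y y)) (\<phi> (bb y y)) = \<phi> (bb y y)"
      by (rule phi_idem) (simp_all add: A_Bm Bm_mult)
    fix a :: 'f
    have "\<phi> (bb y y + smul a (bb x y)) = \<phi> (bb y y) + smul a (\<phi> (bb x y))"
      using assms by (simp add: phi_add phi_smul A_Bm A_smul)
    moreover have "inc_mult le (\<phi> (bb y y + smul a (bb x y))) (\<phi> (bb y y + smul a (bb x y))) = \<phi> (bb y y + smul a (bb x y))"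
      by (rule phi_idem) (use assms in \<open>simp_all add: A_Bm A_smul A_add bs add.commute\<close>)
    ultimately show "inc_mult le (\<phi> (bb y y) + smul a (\<phi> (bb x y))) (\<phi> (bb y y) + smul a (\<phi> (bb x y))) = \<phi> (bb y y) + smul a (\<phi> (bb x y))"
      by simp
  qed
  then show ?thesis by simp
qed

lemma idB: "e \<in> incidence_algebra le \<Longrightarrow> inc_mult le e e = e \<Longrightarrow> \<phi> e = X \<Longrightarrow> inc_mult le X X = X"
  using phi_idem by blast

lemma K3: assumes "x \<noteq> u"
  shows "jor le (\<phi> (bb x x)) (\<phi> (bb u u)) = 0"
proof -
  have "jor le (\<phi> (bb x x)) (\<phi> (bb u u)) = 0"
  proof (rule L_iv[of le 0])
    show "inc_mult le 0 0 = (0::'x\<Rightarrow>'x\<Rightarrow>'f)" by simp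
    show "inc_mult le (0 + \<phi> (bb x x)) (0 + \<phi> (bb x x)) = 0 + \<phi> (bb x x)"
      by (rule idB[of "bb x x"]) (simp_all add: A_Bm bs)
    show "inc_mult le (0 + \<phi> (bb u u)) (0 + \<phi> (bb u u)) = 0 + \<phi> (bb u u)"
      by (rule idB[of "bb u u"]) (simp_all add: A_Bm bs)
    show "inc_mult le (0 + \<phi> (bb x x) + \<phi> (bb u u)) (0 + \<phi> (bb x x) + \<phi> (bb u u)) = 0 + \<phi> (bb x x) + \<phi> (bb u u)"
      by (rule idB[of "bb x x + bb u u"]) (use assms in \<open>simp_all add: A_Bm A_add bs phi_add\<close>)
  qed
  then show ?thesis .
qed

lemma K4: assumes "le u v" "u \<noteq> v" "x \<noteq> u" "x \<noteq> v"
  shows "jor le (\<phi> (bb x x)) (\<phi> (bb u v)) = 0"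
proof -
  have "jor le (\<phi> (bb u v)) (\<phi> (bb x x)) = 0"
  proof (rule L_iv[of le "\<phi> (bb u u)"])
    show "inc_mult le (\<phi> (bb u u)) (\<phi> (bb u u)) = \<phi> (bb u u)"
      by (rule idB[of "bb u u"]) (simp_all add: A_Bm bs)
    show "inc_mult le (\<phi> (bb u u) + \<phi> (bb u v)) (\<phi> (bb u u) + \<phi> (bb u v)) = \<phi> (bb u u) + \<phi> (bb u v)"
      by (rule idB[of "bb u u + bb u v"]) (use assms in \<open>simp_all add: A_Bm A_add bs phi_add\<close>)
    show "inc_mult le (\<phi> (bb u u) + \<phi> (bb x x)) (\<phi> (bb u u) + \<phi> (bb x x)) = \<phi> (bb u u) + \<phi> (bb x x)"
      by (rule idB[of "bb u u + bb x x"]) (use assms in \<open>simp_all add: A_Bm A_add bs phi_add\<close>)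
    show "inc_mult le (\<phi> (bb u u) + \<phi> (bb u v) + \<phi> (bb x x)) (\<phi> (bb u u) + \<phi> (bb u v) + \<phi> (bb x x)) = \<phi> (bb u u) + \<phi> (bb u v) + \<phi> (bb x x)"
      by (rule idB[of "bb u u + bb u v + bb x x"]) (use assms in \<open>simp_all add: A_Bm A_add bs phi_add\<close>)
  qed
  then show ?thesis by (simp add: jor_comm)
qed

lemma K5: assumes "le x y" "le u v" "x \<noteq> y" "u \<noteq> v" "y \<noteq> u" "v \<noteq> x" "(x,y) \<noteq> (u,v)"
  shows "jor le (\<phi> (bb x y)) (\<phi> (bb u v)) = 0"
proof (cases "x = u")
  case True
  then have ux: "u = x" by simp
  have yv: "y \<noteq> v" using assms(7) ux by auto
  show ?thesis unfolding ux
  proof (rule L_iv[of le "\<phi> (bb x x)"])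
    show "inc_mult le (\<phi> (bb x x)) (\<phi> (bb x x)) = \<phi> (bb x x)"
      by (rule idB[of "bb x x"]) (simp_all add: A_Bm bs)
    show "inc_mult le (\<phi> (bb x x) + \<phi> (bb x y)) (\<phi> (bb x x) + \<phi> (bb x y)) = \<phi> (bb x x) + \<phi> (bb x y)"
      by (rule idB[of "bb x x + bb x y"]) (use assms in \<open>simp_all add: A_Bm A_add bs phi_add\<close>)
    show "inc_mult le (\<phi> (bb x x) + \<phi> (bb x v)) (\<phi> (bb x x) + \<phi> (bb x v)) = \<phi> (bb x x) + \<phi> (bb x v)"
      by (rule idB[of "bb x x + bb x v"]) (use assms ux in \<open>simp_all add: A_Bm A_add bs phi_add\<close>)
    show "inc_mult le (\<phi> (bb x x) + \<phi> (bb x y) + \<phi> (bb x v)) (\<phi> (bb x x) + \<phi> (bb x y) + \<phi> (bb x v)) = \<phi> (bb x x) + \<phi> (bb x y) + \<phi> (bb x v)"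
      by (rule idB[of "bb x x + bb x y + bb x v"]) (use assms ux yv in \<open>simp_all add: A_Bm A_add bs phi_add\<close>)
  qed
next
  case xu: False
  show ?thesis
  proof (cases "y = v")
    case True
    then have vy: "v = y" by simp
    show ?thesis unfolding vy
    proof (rule L_iv[of le "\<phi> (bb y y)"])
      show "inc_mult le (\<phi> (bb y y)) (\<phi> (bb y y)) = \<phi> (bb y y)"
        by (rule idB[of "bb y y"]) (simp_all add: A_Bm bs)
      show "inc_mult le (\<phi> (bb y y) + \<phi> (bb x y)) (\<phi> (bb y y) + \<phi> (bb x y)) = \<phi> (bb y y) + \<phi> (bb x y)"
        by (rule idB[of "bb y y + bb x y"]) (use assms in \<open>simp_all add: A_Bm A_add bs phi_add add_ac\<close>)
      show "inc_mult le (\<phi> (bb y y) + \<phi> (bb u y)) (\<phi> (bb y y) + \<phi> (bb u y)) = \<phi> (bb y y) + \<phi> (bb u y)"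
        by (rule idB[of "bb y y + bb u y"]) (use assms vy in \<open>simp_all add: A_Bm A_add bs phi_add add_ac\<close>)
      show "inc_mult le (\<phi> (bb y y) + \<phi> (bb x y) + \<phi> (bb u y)) (\<phi> (bb y y) + \<phi> (bb x y) + \<phi> (bb u y)) = \<phi> (bb y y) + \<phi> (bb x y) + \<phi> (bb u y)"
        by (rule idB[of "bb y y + bb x y + bb u y"]) (use assms vy xu in \<open>simp_all add: A_Bm A_add bs phi_add add_ac\<close>)
    qed
  next
    case yv: False
    show ?thesis
    proof (rule L_iv[of le "\<phi> (bb x x) + \<phi> (bb u u)"])
      show "inc_mult le (\<phi> (bb x x) + \<phi> (bb u u)) (\<phi> (bb x x) + \<phi> (bb u u)) = \<phi> (bb x x) + \<phi> (bb u u)"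
        by (rule idB[of "bb x x + bb u u"]) (use assms xu in \<open>simp_all add: A_Bm A_add bs phi_add\<close>)
      show "inc_mult le (\<phi> (bb x x) + \<phi> (bb u u) + \<phi> (bb x y)) (\<phi> (bb x x) + \<phi> (bb u u) + \<phi> (bb x y)) = \<phi> (bb x x) + \<phi> (bb u u) + \<phi> (bb x y)"
        by (rule idB[of "bb x x + bb u u + bb x y"]) (use assms xu yv in \<open>simp_all add: A_Bm A_add bs phi_add add_ac\<close>)
      show "inc_mult le (\<phi> (bb x x) + \<phi> (bb u u) + \<phi> (bb u v)) (\<phi> (bb x x) + \<phi> (bb u u) + \<phi> (bb u v)) = \<phi> (bb x x) + \<phi> (bb u u) + \<phi> (bb u v)"
        by (rule idB[of "bb x x + bb u u + bb u v"]) (use assms xu yv in \<open>simp_all add: A_Bm A_add bs phi_add add_ac\<close>)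
      show "inc_mult le (\<phi> (bb x x) + \<phi> (bb u u) + \<phi> (bb x y) + \<phi> (bb u v)) (\<phi> (bb x x) + \<phi> (bb u u) + \<phi> (bb x y) + \<phi> (bb u v)) = \<phi> (bb x x) + \<phi> (bb u u) + \<phi> (bb x y) + \<phi> (bb u v)"
        by (rule idB[of "bb x x + bb u u + bb x y + bb u v"]) (use assms xu yv in \<open>simp_all add: A_Bm A_add bs phi_add add_ac\<close>)
    qed
  qed
qed

lemma K6: assumes "le x y" "le y v" "x \<noteq> y" "y \<noteq> v"
  shows "jor le (\<phi> (bb x y)) (\<phi> (bb y v)) = \<phi> (bb x v)"
proof -
  have xv: "x \<noteq> v" using assms asy by blast
  have lxv: "le x v" using assms tr by blast
  note k1xy = K1[OF assms(1,3)] and k1yv = K1[OF assms(2,4)] and k1xv = K1[OF lxv xv]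
  show ?thesis
  proof (rule L_iii[of le "\<phi> (bb x x) + \<phi> (bb v v)"])
    show "inc_mult le (\<phi> (bb x x) + \<phi> (bb v v) + \<phi> (bb x y) + \<phi> (bb y v) + \<phi> (bb x v))
        (\<phi> (bb x x) + \<phi> (bb v v) + \<phi> (bb x y) + \<phi> (bb y v) + \<phi> (bb x v)) =
        \<phi> (bb x x) + \<phi> (bb v v) + \<phi> (bb x y) + \<phi> (bb y v) + \<phi> (bb x v)"
      by (rule idB[of "bb x x + bb v v + bb x y + bb y v + bb x v"]) (use assms xv lxv in \<open>simp_all add: A_Bm A_add bs phi_add add_ac\<close>)
    show "inc_mult le (\<phi> (bb x x) + \<phi> (bb v v)) (\<phi> (bb x x) + \<phi> (bb v v)) = \<phi> (bb x x) + \<phi> (bb v v)"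
      by (rule idB[of "bb x x + bb v v"]) (use xv in \<open>simp_all add: A_Bm A_add bs phi_add\<close>)
    show "jor le (\<phi> (bb x x) + \<phi> (bb v v)) (\<phi> (bb x y)) = \<phi> (bb x y)"
      using k1xy K4[of x y v] assms xv by (simp add: jor_add_l)
    show "jor le (\<phi> (bb x x) + \<phi> (bb v v)) (\<phi> (bb y v)) = \<phi> (bb y v)"
      using K2[OF assms(2,4)] K4[of y v x] assms xv by (simp add: jor_add_l)
    show "jor le (\<phi> (bb x x) + \<phi> (bb v v)) (\<phi> (bb x v)) = 0"
      using k1xv K2[OF lxv xv] by (simp add: jor_add_l)
    show "inc_mult le (\<phi> (bb x y)) (\<phi> (bb x y)) = 0" using k1xy by simp
    show "inc_mult le (\<phi> (bb y v)) (\<phi> (bb y v)) = 0" using k1yv by simp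
    show "inc_mult le (\<phi> (bb x v)) (\<phi> (bb x v)) = 0" using k1xv by simp
    show "jor le (\<phi> (bb x y)) (\<phi> (bb x v)) = 0" using K5[of x y x v] assms xv lxv by simp
    show "jor le (\<phi> (bb y v)) (\<phi> (bb x v)) = 0" using K5[of y v x v] assms xv lxv by simp
  qed
qed

lemma jBB: "le x y \<Longrightarrow> le u v \<Longrightarrow> jor le (bb x y) (bb u v) = (if y = u then bb x v else 0) + (if v = x then bb u y else 0)"
  by (simp add: jor_def Bm_mult)

lemma key_diag: assumes "le u v"
  shows "\<phi> (jor le (bb x x) (bb u v)) = jor le (\<phi> (bb x x)) (\<phi> (bb u v))"
proof (cases "u = v")
  case uv: True
  show ?thesis
  proof (cases "x = u")
    case True then show ?thesis using uv by (simp add: jor_self[OF ch2] phi_zero)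
  next
    case False then show ?thesis using uv K3[of x u] by (simp add: jBB phi_zero)
  qed
next
  case uv: False
  show ?thesis
  proof (cases "x = u")
    case True then show ?thesis using uv assms K1[of u v] by (simp add: jBB)
  next
    case xu: False
    show ?thesis
    proof (cases "x = v")
      case True then show ?thesis using uv assms K2[of u v] xu by (simp add: jBB)
    next
      case False then show ?thesis using uv assms K4[of u v x] xu by (simp add: jBB phi_zero)
    qed
  qed
qed

lemma key: assumes "le x y" "le u v"
  shows "\<phi> (jor le (bb x y) (bb u v)) = jor le (\<phi> (bb x y)) (\<phi> (bb u v))"
proof (cases "x = y")
  case True then show ?thesis using key_diag[OF assms(2)] by simp
next
  case xy: False
  show ?thesis
  proof (cases "u = v")
    case True then show ?thesis using key_diag[OF assms(1), of u] by (simp add: jor_comm)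
  next
    case uv: False
    show ?thesis
    proof (cases "(x,y) = (u,v)")
      case True then show ?thesis by (auto simp: jor_self[OF ch2] phi_zero)
    next
      case ne: False
      show ?thesis
      proof (cases "y = u")
        case True
        have "v \<noteq> x" using assms True xy asy by blast
        then show ?thesis using True K6[of x y v] assms xy uv by (simp add: jBB)
      next
        case yu: False
        show ?thesis
        proof (cases "v = x")
          case True then show ?thesis using K6[of u v y] assms xy uv yu by (simp add: jBB jor_comm)
        next
          case False then show ?thesis using K5[of x y u v] assms xy uv yu ne by (simp add: jBB phi_zero)
        qed
      qed
    qed
  qed
qed

definition PP :: "('x \<times> 'x) set" where "PP = {p. le (fst p) (snd p)}"

lemma decomp: assumes a: "a \<in> incidence_algebra le"
  shows "a = (\<Sum>p\<in>PP. smul (a (fst p) (snd p)) (bb (fst p) (snd p)))"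
proof (rule ext, rule ext)
  fix i j
  have "(\<Sum>p\<in>PP. smul (a (fst p) (snd p)) (bb (fst p) (snd p))) i j
      = (\<Sum>p\<in>PP. a (fst p) (snd p) * (if i = fst p \<and> j = snd p then 1 else 0))"
    by (simp add: sum_fun_apply2 Bm_def)
  also have "\<dots> = (\<Sum>p\<in>PP. if (i,j) = p then a i j else 0)" by (rule sum.cong) auto
  also have "\<dots> = (if (i,j) \<in> PP then a i j else 0)" by (simp add: sum.delta)
  also have "\<dots> = a i j" using a by (auto simp: incidence_algebra_def PP_def)
  finally show "a i j = (\<Sum>p\<in>PP. smul (a (fst p) (snd p)) (bb (fst p) (snd p))) i j" by simp
qed

lemma A_sum: "(\<And>p. p \<in> S \<Longrightarrow> g p \<in> incidence_algebra le) \<Longrightarrow> sum g S \<in> incidence_algebra le"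
  by (simp add: incidence_algebra_def sum_fun_apply2)

lemma main_ctx: assumes a: "a \<in> incidence_algebra le" and c: "c \<in> incidence_algebra le"
  shows "\<phi> (jor le a c) = jor le (\<phi> a) (\<phi> c)"
proof -
  have memb: "\<And>p. p \<in> PP \<Longrightarrow> bb (fst p) (snd p) \<in> incidence_algebra le" by (simp add: PP_def A_Bm)
  have pa: "\<phi> d = (\<Sum>p\<in>PP. smul (d (fst p) (snd p)) (\<phi> (bb (fst p) (snd p))))"
    if d: "d \<in> incidence_algebra le" for d
  proof -
    have "\<phi> d = \<phi> (\<Sum>p\<in>PP. smul (d (fst p) (snd p)) (bb (fst p) (snd p)))"
      using decomp[OF d] by (rule arg_cong)
    also have "\<dots> = (\<Sum>p\<in>PP. \<phi> (smul (d (fst p) (snd p)) (bb (fst p) (snd p))))"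
      by (rule phi_sum) (simp add: A_smul memb)
    also have "\<dots> = (\<Sum>p\<in>PP. smul (d (fst p) (snd p)) (\<phi> (bb (fst p) (snd p))))"
      by (rule sum.cong) (simp_all add: phi_smul memb)
    finally show ?thesis .
  qed
  have "jor le a c = jor le (\<Sum>p\<in>PP. smul (a (fst p) (snd p)) (bb (fst p) (snd p)))
                            (\<Sum>p\<in>PP. smul (c (fst p) (snd p)) (bb (fst p) (snd p)))"
    using decomp[OF a] decomp[OF c] by (rule arg_cong2)
  also have "\<dots> = (\<Sum>p\<in>PP. \<Sum>q\<in>PP. smul (a (fst p) (snd p) * c (fst q) (snd q))
                          (jor le (bb (fst p) (snd p)) (bb (fst q) (snd q))))"
    by (rule jor_expand)
  finally have ja: "jor le a c = \<dots>" .
  have "\<phi> (jor le a c) = (\<Sum>p\<in>PP. \<phi> (\<Sum>q\<in>PP. smul (a (fst p) (snd p) * c (fst q) (snd q))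
                          (jor le (bb (fst p) (snd p)) (bb (fst q) (snd q)))))"
    unfolding ja by (rule phi_sum) (rule A_sum, rule A_smul, rule A_jor)
  also have "\<dots> = (\<Sum>p\<in>PP. \<Sum>q\<in>PP. smul (a (fst p) (snd p) * c (fst q) (snd q))
                          (\<phi> (jor le (bb (fst p) (snd p)) (bb (fst q) (snd q)))))"
    by (rule sum.cong, simp, subst phi_sum, rule A_smul, rule A_jor, rule sum.cong, simp, rule phi_smul, rule A_jor)
  also have "\<dots> = (\<Sum>p\<in>PP. \<Sum>q\<in>PP. smul (a (fst p) (snd p) * c (fst q) (snd q))
                          (jor le (\<phi> (bb (fst p) (snd p))) (\<phi> (bb (fst q) (snd q)))))"
    by (rule sum.cong, simp, rule sum.cong, simp) (simp add: key PP_def)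
  also have "\<dots> = jor le (\<phi> a) (\<phi> c)"
    unfolding pa[OF a] pa[OF c] by (rule jor_expand[symmetric])
  finally show ?thesis .
qed

end

theorem corollary3p2:
  fixes le :: "'x::finite \<Rightarrow> 'x \<Rightarrow> bool"
    and \<phi> :: "('x \<Rightarrow> 'x \<Rightarrow> 'f::field) \<Rightarrow> ('x \<Rightarrow> 'x \<Rightarrow> 'f)"
  assumes "is_partial_order le"
    and "(1::'f) + 1 = 0"
    and "\<exists>c::'f. c \<noteq> 0 \<and> c \<noteq> 1"
    and "inc_linear le \<phi>"
    and "bij_betw \<phi> (incidence_algebra le) (incidence_algebra le)"
    and "\<phi> ` inc_idempotents le \<subseteq> inc_idempotents le"
  shows "\<forall>a\<in>incidence_algebra le. \<forall>b\<in>incidence_algebra le.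
           \<phi> (\<lambda>x y. inc_mult le a b x y + inc_mult le b a x y) =
           (\<lambda>x y. inc_mult le (\<phi> a) (\<phi> b) x y + inc_mult le (\<phi> b) (\<phi> a) x y)"
proof (intro ballI)
  fix a b :: "'x \<Rightarrow> 'x \<Rightarrow> 'f" assume ab: "a \<in> incidence_algebra le" "b \<in> incidence_algebra le"
  have e: "\<And>f g. (\<lambda>x y. inc_mult le f g x y + inc_mult le g f x y) = jor le f g"
    by (simp add: jor_def fun_eq_iff)
  show "\<phi> (\<lambda>x y. inc_mult le a b x y + inc_mult le b a x y) =
           (\<lambda>x y. inc_mult le (\<phi> a) (\<phi> b) x y + inc_mult le (\<phi> b) (\<phi> a) x y)"
    unfolding e by (rule main_ctx[OF assms(1,2,3,4,6) ab])
qed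

end
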